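(* Let $\phi:H\to G$ be a homomorphism of graphs, where $G$ is a finite graph. Then the induced functor of free categories $\mathcal{F}(\phi):\mathcal{F}(H)\to\mathcal{F}(G)$ is finitary if and only if $H$ is finite.
   Context: A graph is a directed multigraph: a set of nodes and a set of edges, each edge having a source node and a target node; it is finite if it has finitely many nodes and edges. A homomorphism of graphs maps nodes to nodes and edges to edges preserving source and target. $\mathcal{F}(G)$ denotes the free category generated by $G$: objects are nodes of $G$ and arrows are finite paths (including empty paths as identities), composed by concatenation; $\mathcal{F}(\phi)$ acts by $\phi$ on nodes and edgewise on paths. A functor $p:\mathcal{D}\to\mathcal{C}$ is finitary if for every object $A$ of $\mathcal{C}$ the set $p^{-1}(A)$ of objects of $\mathcal{D}$ mapped to $A$ is finite, and for every arrow $w$ of $\mathcal{C}$ the set $p^{-1}(w)$ of arrows of $\mathcal{D}$ mapped to $w$ is finite. *)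

theory Defs
  imports Main
begin

record ('v, 'e) graph =
  nodes :: "'v set"
  edges :: "'e set"
  src :: "'e \<Rightarrow> 'v"
  tgt :: "'e \<Rightarrow> 'v"

definition wf_graph :: "('v, 'e) graph \<Rightarrow> bool" where
  "wf_graph G \<longleftrightarrow> (\<forall>e\<in>edges G. src G e \<in> nodes G \<and> tgt G e \<in> nodes G)"

definition finite_graph :: "('v, 'e) graph \<Rightarrow> bool" where
  "finite_graph G \<longleftrightarrow> finite (nodes G) \<and> finite (edges G)"

definition graph_hom ::
  "('v, 'e) graph \<Rightarrow> ('w, 'f) graph \<Rightarrow> ('v \<Rightarrow> 'w) \<Rightarrow> ('e \<Rightarrow> 'f) \<Rightarrow> bool" where
  "graph_hom H G fv fe \<longleftrightarrow>
     (\<forall>x\<in>nodes H. fv x \<in> nodes G) \<and>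
     (\<forall>e\<in>edges H. fe e \<in> edges G \<and> src G (fe e) = fv (src H e) \<and> tgt G (fe e) = fv (tgt H e))"

fun is_path :: "('v, 'e) graph \<Rightarrow> 'v \<Rightarrow> 'e list \<Rightarrow> 'v \<Rightarrow> bool" where
  "is_path G a [] b \<longleftrightarrow> a \<in> nodes G \<and> a = b"
| "is_path G a (e # es) b \<longleftrightarrow> e \<in> edges G \<and> src G e = a \<and> a \<in> nodes G \<and> is_path G (tgt G e) es b"

text \<open>Free category F(G): objects are the nodes, arrows are triples (source, path, target)
  (the empty path at a is the identity at a), composition is concatenation.\<close>
definition free_objs :: "('v, 'e) graph \<Rightarrow> 'v set" where
  "free_objs G = nodes G"

definition free_arrs :: "('v, 'e) graph \<Rightarrow> ('v \<times> 'e list \<times> 'v) set" where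
  "free_arrs G = {(a, es, b). is_path G a es b}"

definition free_fun_obj :: "('v \<Rightarrow> 'w) \<Rightarrow> 'v \<Rightarrow> 'w" where
  "free_fun_obj fv = fv"

definition free_fun_arr ::
  "('v \<Rightarrow> 'w) \<Rightarrow> ('e \<Rightarrow> 'f) \<Rightarrow> 'v \<times> 'e list \<times> 'v \<Rightarrow> 'w \<times> 'f list \<times> 'w" where
  "free_fun_arr fv fe = (\<lambda>(a, es, b). (fv a, map fe es, fv b))"

definition finitary ::
  "'a set \<Rightarrow> 'b set \<Rightarrow> 'c set \<Rightarrow> 'd set \<Rightarrow> ('a \<Rightarrow> 'c) \<Rightarrow> ('b \<Rightarrow> 'd) \<Rightarrow> bool" where
  "finitary DObj DArr CObj CArr po pa \<longleftrightarrow>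
     (\<forall>A\<in>CObj. finite {x\<in>DObj. po x = A}) \<and>
     (\<forall>w\<in>CArr. finite {u\<in>DArr. pa u = w})"

end

theory Submission
  imports Defs
begin

lemma path_props: "is_path G a es b \<Longrightarrow> a \<in> nodes G \<and> b \<in> nodes G \<and> set es \<subseteq> edges G"
  by (induction es arbitrary: a) auto

theorem mainTheorem2:
  fixes H :: "('v, 'e) graph" and G :: "('w, 'f) graph"
    and fv :: "'v \<Rightarrow> 'w" and fe :: "'e \<Rightarrow> 'f"
  assumes "wf_graph H" and "wf_graph G"
    and "graph_hom H G fv fe"
    and "finite_graph G"
  shows "finitary (free_objs H) (free_arrs H) (free_objs G) (free_arrs G)
           (free_fun_obj fv) (free_fun_arr fv fe)
         \<longleftrightarrow> finite_graph H"
proof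
  assume F: "finitary (free_objs H) (free_arrs H) (free_objs G) (free_arrs G)
           (free_fun_obj fv) (free_fun_arr fv fe)"
  have fG: "finite (nodes G)" "finite (edges G)" using assms(4) by (auto simp: finite_graph_def)
  have "nodes H \<subseteq> (\<Union>A\<in>nodes G. {x\<in>nodes H. fv x = A})"
    using assms(3) by (auto simp: graph_hom_def)
  moreover have "finite (\<Union>A\<in>nodes G. {x\<in>nodes H. fv x = A})"
    using F fG by (auto simp: finitary_def free_objs_def free_fun_obj_def)
  ultimately have n: "finite (nodes H)" by (rule finite_subset)
  let ?S = "\<Union>f\<in>edges G. {u\<in>free_arrs H. free_fun_arr fv fe u = (src G f, [f], tgt G f)}"
  have "finite ?S"
  proof (rule finite_UN_I[OF fG(2)])
    fix f assume "f \<in> edges G"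
    then have "(src G f, [f], tgt G f) \<in> free_arrs G"
      using assms(2) by (auto simp: wf_graph_def free_arrs_def)
    then show "finite {u\<in>free_arrs H. free_fun_arr fv fe u = (src G f, [f], tgt G f)}"
      using F by (auto simp: finitary_def)
  qed
  moreover have "edges H \<subseteq> (\<lambda>(a, es, b). hd es) ` ?S"
  proof
    fix e assume e: "e \<in> edges H"
    have "(src H e, [e], tgt H e) \<in> ?S"
      using e assms(1,3) by (auto simp: wf_graph_def graph_hom_def free_arrs_def free_fun_arr_def)
    then show "e \<in> (\<lambda>(a, es, b). hd es) ` ?S"
      by (rule rev_image_eqI) simp
  qed
  ultimately have "finite (edges H)" by (meson finite_imageI finite_subset)
  with n show "finite_graph H" by (simp add: finite_graph_def)
next
  assume fH: "finite_graph H"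
  then have fn: "finite (nodes H)" and fe': "finite (edges H)" by (auto simp: finite_graph_def)
  show "finitary (free_objs H) (free_arrs H) (free_objs G) (free_arrs G)
           (free_fun_obj fv) (free_fun_arr fv fe)"
    unfolding finitary_def
  proof (intro conjI ballI)
    fix A show "finite {x \<in> free_objs H. free_fun_obj fv x = A}"
      using fn by (simp add: free_objs_def)
  next
    fix w :: "'w \<times> 'f list \<times> 'w"
    obtain a ws b where w: "w = (a, ws, b)" by (cases w) auto
    have "{u \<in> free_arrs H. free_fun_arr fv fe u = w} \<subseteq>
          nodes H \<times> {es. set es \<subseteq> edges H \<and> length es = length ws} \<times> nodes H"
      using path_props[of H] by (auto simp: w free_arrs_def free_fun_arr_def)
    moreover have "finite (nodes H \<times> {es. set es \<subseteq> edges H \<and> length es = length ws} \<times> nodes H)"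
      using fn fe' finite_lists_length_eq by blast
    ultimately show "finite {u \<in> free_arrs H. free_fun_arr fv fe u = w}" by (rule finite_subset)
  qed
qed

end
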